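(* Let $T$ and $T_{ij}$ ($1\le i\le s$, $1\le j\le r_i$) be quasiperiodic trigonometric polynomials on $\mathbb R^n$, and let $V=\bigcup_{i=1}^s\bigcap_{j=1}^{r_i}V_{ij}$ where each $V_{ij}$ is either $\{x:T_{ij}(x)=0\}$ or $\{x:T_{ij}(x)>0\}$. Let $A_1,\dots,A_N\in\mathbb R^n$ be free generators of the subgroup $\mathcal A$ of $(\mathbb R^n,+)$ generated by all frequencies of $T$ and of the $T_{ij}$ (so $\mathcal A=(A_1)\oplus\dots\oplus(A_N)$), and let $\Phi(x)=(A_1x,\dots,A_Nx)$. If $\Phi:\mathbb R^n\to\mathbb R^N$ is not injective (i.e. the orbit $\{\Phi(x)\bmod\mathbb Z^N\}$ has dimension less than $n$), then $V$ has no isolated points, and for every bounded $\Omega\subset\mathbb R^n$ with nonzero volume the mean value $M_\Omega$ of $T$ over the isolated points of $V$ is equal to zero.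
   Context: A quasiperiodic trigonometric polynomial is a function $T(x)=\sum_{k=1}^p c_k\cos 2\pi\alpha_kx+d_k\sin2\pi\alpha_kx$ with $c_k,d_k\in\mathbb R$ and frequencies $\alpha_k\in\mathbb R^n$ ($\alpha_kx$ the standard scalar product). For $\lambda>0$, $S_\Omega(\lambda)$ is the sum of the values of $T$ at the isolated points of $V$ lying in $\lambda\Omega$, and $M_\Omega=\lim_{\lambda\to\infty}S_\Omega(\lambda)/\operatorname{Vol}(\lambda\Omega)$. *)

theory Defs
  imports "HOL-Analysis.Analysis"
begin

definition qtrig :: "nat \<Rightarrow> (nat \<Rightarrow> real) \<Rightarrow> (nat \<Rightarrow> real) \<Rightarrow> (nat \<Rightarrow> real^'n) \<Rightarrow> real^'n \<Rightarrow> real"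
  where "qtrig p c d \<alpha> x =
    (\<Sum>k<p. c k * cos (2 * pi * (\<alpha> k \<bullet> x)) + d k * sin (2 * pi * (\<alpha> k \<bullet> x)))"

definition int_span :: "'a::real_vector set \<Rightarrow> 'a set"
  where "int_span S = {(\<Sum>v\<in>F. of_int (k v) *\<^sub>R v) | F k. finite F \<and> F \<subseteq> S}"

definition free_generators :: "nat \<Rightarrow> (nat \<Rightarrow> 'a::real_vector) \<Rightarrow> 'a set \<Rightarrow> bool"
  where "free_generators N A G \<longleftrightarrow>
     int_span (A ` {..<N}) = G \<and>
     (\<forall>k::nat \<Rightarrow> int. (\<Sum>i<N. of_int (k i) *\<^sub>R A i) = 0 \<longrightarrow> (\<forall>i<N. k i = 0))"

definition Phi :: "nat \<Rightarrow> (nat \<Rightarrow> real^'n) \<Rightarrow> real^'n \<Rightarrow> real list"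
  where "Phi N A x = map (\<lambda>k. A k \<bullet> x) [0..<N]"

definition isolated_points :: "'a::topological_space set \<Rightarrow> 'a set"
  where "isolated_points V = {x. x isolated_in V}"

definition S_Omega :: "('a::real_normed_vector \<Rightarrow> real) \<Rightarrow> 'a set \<Rightarrow> 'a set \<Rightarrow> real \<Rightarrow> real"
  where "S_Omega T V \<Omega> t = (\<Sum>x \<in> isolated_points V \<inter> ((\<lambda>y. t *\<^sub>R y) ` \<Omega>). T x)"

end

theory Submission
  imports Defs
begin

lemma int_span_orth:
  fixes w :: "'a::real_inner"
  assumes "f \<in> int_span S" "\<And>v. v \<in> S \<Longrightarrow> v \<bullet> w = 0"
  shows "f \<bullet> w = 0"
proof -
  from assms(1) obtain F k where f: "f = (\<Sum>v\<in>F. of_int (k v) *\<^sub>R v)" "finite F" "F \<subseteq> S"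
    unfolding int_span_def by blast
  have "f \<bullet> w = (\<Sum>v\<in>F. of_int (k v) * (v \<bullet> w))"
    unfolding f(1) by (simp add: inner_sum_left)
  also have "\<dots> = 0" using f(3) assms(2) by (intro sum.neutral) auto
  finally show ?thesis .
qed

lemma in_int_span: "v \<in> S \<Longrightarrow> v \<in> int_span S"
  unfolding int_span_def
  by (rule CollectI, rule exI[of _ "{v}"], rule exI[of _ "\<lambda>_. 1"]) simp

lemma qtrig_shift:
  assumes "\<And>k. k < p \<Longrightarrow> \<alpha> k \<bullet> w = 0"
  shows "qtrig p c d \<alpha> (x + t *\<^sub>R w) = qtrig p c d \<alpha> x"
  unfolding qtrig_def using assms by (intro sum.cong) (auto simp: inner_add_right)

theorem lemma2:
  fixes p :: nat and c d :: "nat \<Rightarrow> real" and \<alpha> :: "nat \<Rightarrow> real^'n"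
    and s :: nat and r :: "nat \<Rightarrow> nat"
    and pT :: "nat \<Rightarrow> nat \<Rightarrow> nat" and cT dT :: "nat \<Rightarrow> nat \<Rightarrow> nat \<Rightarrow> real"
    and \<alpha>T :: "nat \<Rightarrow> nat \<Rightarrow> nat \<Rightarrow> real^'n"
    and is_eq :: "nat \<Rightarrow> nat \<Rightarrow> bool"
    and N :: nat and A :: "nat \<Rightarrow> real^'n"
  defines "T \<equiv> qtrig p c d \<alpha>"
    and "Vij \<equiv> \<lambda>i j. if is_eq i j then {x. qtrig (pT i j) (cT i j) (dT i j) (\<alpha>T i j) x = 0}
                                   else {x. qtrig (pT i j) (cT i j) (dT i j) (\<alpha>T i j) x > 0}"
  defines "V \<equiv> (\<Union>i<s. \<Inter>j<r i. Vij i j)"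
    and "freqs \<equiv> \<alpha> ` {..<p} \<union> (\<Union>i<s. \<Union>j<r i. \<alpha>T i j ` {..<pT i j})"
  assumes free: "free_generators N A (int_span freqs)"
    and not_inj: "\<not> inj (Phi N A)"
  shows "isolated_points V = {} \<and>
         (\<forall>\<Omega> :: (real^'n) set. bounded \<Omega> \<and> \<Omega> \<in> sets lebesgue \<and> emeasure lebesgue \<Omega> \<noteq> 0 \<longrightarrow>
         ((\<lambda>t. S_Omega T V \<Omega> t / measure lebesgue ((\<lambda>y. t *\<^sub>R y) ` \<Omega>)) \<longlongrightarrow> 0) at_top)"
proof -
  from not_inj obtain x y where xy: "Phi N A x = Phi N A y" "x \<noteq> y"
    unfolding inj_def by blast
  define w where "w = y - x"
  have w0: "w \<noteq> 0" using xy(2) unfolding w_def by simp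
  have Aw: "A k \<bullet> w = 0" if "k < N" for k
  proof -
    have "\<forall>k\<in>{0..<N}. A k \<bullet> x = A k \<bullet> y"
      using xy(1) unfolding Phi_def by simp
    then have "A k \<bullet> x = A k \<bullet> y" using that by simp
    then show ?thesis using that by (simp add: w_def inner_diff_right)
  qed
  have span: "int_span (A ` {..<N}) = int_span freqs"
    using free unfolding free_generators_def by blast
  have fw: "f \<bullet> w = 0" if "f \<in> freqs" for f
  proof -
    have "f \<in> int_span (A ` {..<N})" using span in_int_span[OF that] by simp
    then show ?thesis by (rule int_span_orth) (auto simp: Aw)
  qed
  have shiftV: "z + t *\<^sub>R w \<in> V" if "z \<in> V" for z t
  proof -
    from that obtain i where i: "i < s" "\<forall>j<r i. z \<in> Vij i j" unfolding V_def by blast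
    have "z + t *\<^sub>R w \<in> Vij i j" if "j < r i" for j
    proof -
      have "qtrig (pT i j) (cT i j) (dT i j) (\<alpha>T i j) (z + t *\<^sub>R w) =
            qtrig (pT i j) (cT i j) (dT i j) (\<alpha>T i j) z"
        by (rule qtrig_shift, rule fw) (use i(1) that in \<open>auto simp: freqs_def\<close>)
      then show ?thesis using i(2) that unfolding Vij_def by (auto split: if_splits)
    qed
    then show ?thesis using i(1) unfolding V_def by blast
  qed
  have noiso: "isolated_points V = {}"
  proof (rule ccontr)
    assume "isolated_points V \<noteq> {}"
    then obtain z where "z isolated_in V" unfolding isolated_points_def by blast
    then obtain e where e: "e > 0" "\<And>u. u \<in> V \<Longrightarrow> dist z u < e \<Longrightarrow> u = z"
      and zV: "z \<in> V"
      by (metis isolated_inE_dist isolated_inE)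
    define t where "t = e / (2 * norm w)"
    have nw: "norm w > 0" using w0 by simp
    have "dist z (z + t *\<^sub>R w) = t * norm w"
      using nw e(1) by (simp add: dist_norm t_def)
    also have "\<dots> = e / 2" using nw by (simp add: t_def)
    finally have "dist z (z + t *\<^sub>R w) < e" using e(1) by simp
    then have "z + t *\<^sub>R w = z" using e(2) shiftV[OF zV] by blast
    moreover have "t \<noteq> 0" using nw e(1) by (simp add: t_def)
    ultimately show False using w0 by simp
  qed
  show ?thesis
    using noiso by (simp add: S_Omega_def)
qed

end
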